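(* Let $X$ and $C$ be random variables with joint distribution $p(X,C)$ on finite support $\mathcal X\times\mathcal C$. For $x\in\mathcal X$ let $\mathbf x=[p(c,x)]_{c\in\mathcal C}\in[0,1]^{|\mathcal C|}$. For $x\ne y$ in $\mathcal X$ let $\pi_{x,y}:\mathcal X\to(\mathcal X\setminus\{x,y\})\cup\{z\}$ ($z\notin\mathcal X$ a new symbol) be the identity on $\mathcal X\setminus\{x,y\}$ and send $x,y$ to $z$, and let $\mathrm{MIL}(\mathbf x,\mathbf y)=I(X;C)-I(\pi_{x,y}(X);C)$. Then $$\mathrm{MIL}(\mathbf x,\mathbf y)=K_1(\mathbf x,\mathbf y)-K_2(\mathbf x,\mathbf y),$$ where $K_1(\mathbf x,\mathbf y)=k\big(\sum_{c\in\mathcal C}p(c,x),\sum_{c\in\mathcal C}p(c,y)\big)$ and $K_2(\mathbf x,\mathbf y)=\sum_{c\in\mathcal C}k(p(c,x),p(c,y))$, and $K_1$, $K_2$ are positive definite kernels on $[0,1]^{|\mathcal C|}$. Hence $\mathrm{MIL}$ is a Kreĭn kernel on $[0,1]^{|\mathcal C|}$.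
   Context: $k(a,b)=a\ln\frac{a+b}{a}+b\ln\frac{a+b}{b}=\eta(a)+\eta(b)-\eta(a+b)$ with $\eta(u)=-u\ln u$, $0\ln0=0$. $I(\cdot;\cdot)$ is mutual information. A symmetric real map $k$ on $\mathcal X\times\mathcal X$ is a positive definite kernel if $\sum_{i,j}a_ia_jk(x_i,x_j)\ge0$ for all finite choices of reals $a_i$ and points $x_i$; it is a Kreĭn kernel if it equals $k_1-k_2$ for two positive definite kernels $k_1,k_2$. *)

theory Defs
  imports Complex_Main
begin

definition eta :: "real \<Rightarrow> real" where
  "eta u = (if u = 0 then 0 else - u * ln u)"

definition kfun :: "real \<Rightarrow> real \<Rightarrow> real" where
  "kfun a b = eta a + eta b - eta (a + b)"

definition mutual_info :: "'a set \<Rightarrow> 'c set \<Rightarrow> ('a \<Rightarrow> 'c \<Rightarrow> real) \<Rightarrow> real" where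
  "mutual_info A C p =
     (\<Sum>a\<in>A. \<Sum>c\<in>C. (if p a c = 0 then 0
        else p a c * ln (p a c / ((\<Sum>c'\<in>C. p a c') * (\<Sum>a'\<in>A. p a' c)))))"

text \<open>Joint pmf of (pi_{x,y}(X), C): the new symbol z is None, other points a are Some a.\<close>
definition merge_pmf :: "('x \<Rightarrow> 'c \<Rightarrow> real) \<Rightarrow> 'x \<Rightarrow> 'x \<Rightarrow> 'x option \<Rightarrow> 'c \<Rightarrow> real" where
  "merge_pmf p x y u c = (case u of None \<Rightarrow> p x c + p y c | Some a \<Rightarrow> p a c)"

definition merged_support :: "'x set \<Rightarrow> 'x \<Rightarrow> 'x \<Rightarrow> 'x option set" where
  "merged_support X x y = insert None (Some ` (X - {x, y}))"

definition MIL :: "('x \<Rightarrow> 'c \<Rightarrow> real) \<Rightarrow> 'x set \<Rightarrow> 'c set \<Rightarrow> 'x \<Rightarrow> 'x \<Rightarrow> real" where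
  "MIL p X C x y = mutual_info X C p - mutual_info (merged_support X x y) C (merge_pmf p x y)"

definition K1 :: "('c::finite \<Rightarrow> real) \<Rightarrow> ('c \<Rightarrow> real) \<Rightarrow> real" where
  "K1 v w = kfun (\<Sum>c\<in>UNIV. v c) (\<Sum>c\<in>UNIV. w c)"

definition K2 :: "('c::finite \<Rightarrow> real) \<Rightarrow> ('c \<Rightarrow> real) \<Rightarrow> real" where
  "K2 v w = (\<Sum>c\<in>UNIV. kfun (v c) (w c))"

definition pd_kernel :: "'a set \<Rightarrow> ('a \<Rightarrow> 'a \<Rightarrow> real) \<Rightarrow> bool" where
  "pd_kernel S K \<longleftrightarrow> (\<forall>u\<in>S. \<forall>v\<in>S. K u v = K v u) \<and>
     (\<forall>n::nat. \<forall>a::nat \<Rightarrow> real. \<forall>xs::nat \<Rightarrow> 'a. (\<forall>i<n. xs i \<in> S) \<longrightarrow>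
        0 \<le> (\<Sum>i<n. \<Sum>j<n. a i * a j * K (xs i) (xs j)))"

definition krein_kernel :: "'a set \<Rightarrow> ('a \<Rightarrow> 'a \<Rightarrow> real) \<Rightarrow> bool" where
  "krein_kernel S K \<longleftrightarrow> (\<exists>K1 K2. pd_kernel S K1 \<and> pd_kernel S K2 \<and>
     (\<forall>u\<in>S. \<forall>v\<in>S. K u v = K1 u v - K2 u v))"

definition unit_cube :: "('c \<Rightarrow> real) set" where
  "unit_cube = {v. \<forall>c. 0 \<le> v c \<and> v c \<le> 1}"

end

theory Submission imports Defs "HOL-Analysis.Analysis" "HOL-Real_Asymp.Real_Asymp" begin

definition phi :: "real \<Rightarrow> real \<Rightarrow> real" where
  "phi r a = (if r = 0 then a else (1 - exp (- (r * a))) / r)"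

lemma phi_nonneg: "0 \<le> r \<Longrightarrow> 0 \<le> a \<Longrightarrow> 0 \<le> phi r a"
  by (auto simp: phi_def divide_nonneg_pos)

lemma phi_meas[measurable]: "(\<lambda>r. phi r a) \<in> borel_measurable borel"
  unfolding phi_def by measurable

lemma L1:
  assumes "0 \<le> a" "0 \<le> r"
  shows "(\<integral>\<^sup>+s. ennreal (exp (- (r * s))) * indicator {0..a} s \<partial>lborel) = ennreal (phi r a)"
proof -
  have "((\<lambda>s. exp (- (r * s))) has_integral phi r a) {0..a}"
  proof (cases "r = 0")
    case True
    then show ?thesis using assms has_integral_const_real[of "1::real" 0 a] by (simp add: phi_def)
  next
    case False
    have "((\<lambda>s. exp (- (r * s))) has_integral ((\<lambda>s. - exp (- (r * s)) / r) a - (\<lambda>s. - exp (- (r * s)) / r) 0)) {0..a}"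
      apply (rule fundamental_theorem_of_calculus)
       apply (simp add: assms)
      using False by (auto intro!: derivative_eq_intros simp: has_real_derivative_iff_has_vector_derivative[symmetric])
    then show ?thesis using False by (simp add: phi_def diff_divide_distrib)
  qed
  then show ?thesis by (intro nn_integral_has_integral_lebesgue') auto
qed

lemma L2:
  assumes "0 < c"
  shows "(\<integral>\<^sup>+r. ennreal (exp (- (r * c))) * indicator {0..} r \<partial>lborel) = ennreal (1/c)"
proof -
  have "(\<integral>\<^sup>+r. ennreal (exp (- (r * c))) * indicator {0..} r \<partial>lborel) = 0 - (- exp (- (0 * c)) / c)"
    apply (rule nn_integral_FTC_atLeast[where F="\<lambda>r. - exp (- (r * c)) / c"])
       apply measurable
    using assms apply (auto intro!: derivative_eq_intros)
    using assms by real_asymp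
  then show ?thesis by simp
qed

lemma L3:
  assumes "0 < s" "0 \<le> b"
  shows "(\<integral>\<^sup>+t. ennreal (1/(s+t)) * indicator {0..b} t \<partial>lborel) = ennreal (ln (s+b) - ln s)"
proof -
  have "((\<lambda>t. 1/(s+t)) has_integral ((\<lambda>t. ln (s+t)) b - (\<lambda>t. ln (s+t)) 0)) {0..b}"
    apply (rule fundamental_theorem_of_calculus)
    using assms by (auto intro!: derivative_eq_intros simp: has_real_derivative_iff_has_vector_derivative[symmetric])
  then show ?thesis using assms by (intro nn_integral_has_integral_lebesgue') auto
qed

lemma xlnx_right: "((\<lambda>s::real. s * ln s) \<longlongrightarrow> 0) (at_right 0)"
  by real_asymp

lemma L4:
  assumes a: "0 < a" and b: "0 < b"
  shows "(\<integral>\<^sup>+s. ennreal (if s = 0 then 0 else ln (s+b) - ln s) * indicator {0..a} s \<partial>lborel) = ennreal (kfun a b)"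
    and "0 \<le> kfun a b"
proof -
  define F where "F s = (s+b) * ln (s+b) - s * ln s" for s :: real
  have lim_gen: "(F \<longlongrightarrow> F x) (at x)" if "0 < x" for x
    unfolding F_def using that b by (intro tendsto_intros) auto
  have c1: "((\<lambda>s. (s+b) * ln (s+b)) \<longlongrightarrow> (0+b) * ln (0+b)) (at 0)"
    using b by (intro tendsto_intros) auto
  have "(F \<longlongrightarrow> F 0) (at_right 0)"
    unfolding F_def using tendsto_diff[OF tendsto_within_subset[OF c1, of "{0<..}"] xlnx_right] by simp
  then have cont: "continuous_on {0..a} F"
    using a lim_gen by (intro continuous_on_IccI) (auto intro: tendsto_within_subset)
  have der: "(F has_vector_derivative (if s = 0 then 0 else ln (s+b) - ln s)) (at s)" if "s \<in> {0<..<a}" for s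
  proof -
    have "(F has_real_derivative ((1 * ln (s+b) + (s+b) * (1/(s+b))) - (1 * ln s + s * (1/s)))) (at s)"
      unfolding F_def using that b by (auto intro!: derivative_eq_intros)
    moreover have "((1 * ln (s+b) + (s+b) * (1/(s+b))) - (1 * ln s + s * (1/s))) = ln (s+b) - ln s"
      using that b by simp
    ultimately show ?thesis using that by (simp add: has_real_derivative_iff_has_vector_derivative)
  qed
  have HI: "((\<lambda>s. if s = 0 then 0 else ln (s+b) - ln s) has_integral (F a - F 0)) {0..a}"
    by (rule fundamental_theorem_of_calculus_interior[OF _ cont der]) (use a in auto)
  have Fk: "F a - F 0 = kfun a b"
    unfolding F_def kfun_def eta_def using a b by (simp add: algebra_simps)
  have nn: "0 \<le> (if s = 0 then 0 else ln (s+b) - ln s)" if "s \<in> {0..a}" for s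
    using that b by auto
  show "(\<integral>\<^sup>+s. ennreal (if s = 0 then 0 else ln (s+b) - ln s) * indicator {0..a} s \<partial>lborel) = ennreal (kfun a b)"
    using nn_integral_has_integral_lebesgue'[OF nn HI] Fk by simp
  show "0 \<le> kfun a b"
    using has_integral_nonneg[OF HI nn] Fk by simp
qed

lemma phi_zero[simp]: "phi r 0 = 0"
  by (simp add: phi_def)

lemma L5_pos:
  assumes a: "0 < a" and b: "0 < b"
  shows "(\<integral>\<^sup>+r. ennreal (phi r a * phi r b) * indicator {0..} r \<partial>lborel) = ennreal (kfun a b)"
proof -
  have S1: "ennreal (phi r a * phi r b) =
     (\<integral>\<^sup>+s. ennreal (exp (- (r * s)) * phi r b) * indicator {0..a} s \<partial>lborel)" if r: "0 \<le> r" for r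
  proof -
    have "(\<integral>\<^sup>+s. ennreal (exp (- (r * s)) * phi r b) * indicator {0..a} s \<partial>lborel)
        = (\<integral>\<^sup>+s. (ennreal (exp (- (r * s))) * indicator {0..a} s) * ennreal (phi r b) \<partial>lborel)"
      using phi_nonneg[OF r, of b] b
      by (intro nn_integral_cong) (simp add: ennreal_mult mult_ac)
    also have "\<dots> = ennreal (phi r a) * ennreal (phi r b)"
      by (subst nn_integral_multc) (auto simp: L1 a r less_imp_le)
    finally show ?thesis
      using phi_nonneg[OF r, of a] phi_nonneg[OF r, of b] a b by (simp add: ennreal_mult)
  qed
  have S4: "(\<integral>\<^sup>+r. ennreal (exp (- (r * s)) * phi r b) * indicator {0..} r \<partial>lborel) = ennreal (ln (s+b) - ln s)"
    if s: "0 < s" for s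
  proof -
    have "(\<integral>\<^sup>+r. ennreal (exp (- (r * s)) * phi r b) * indicator {0..} r \<partial>lborel)
       = (\<integral>\<^sup>+r. (\<integral>\<^sup>+t. ennreal (exp (- (r * (s + t)))) * indicator {0..b} t * indicator {0..} r \<partial>lborel) \<partial>lborel)"
    proof (intro nn_integral_cong)
      fix r :: real
      show "ennreal (exp (- (r * s)) * phi r b) * indicator {0..} r =
         (\<integral>\<^sup>+t. ennreal (exp (- (r * (s + t)))) * indicator {0..b} t * indicator {0..} r \<partial>lborel)"
      proof (cases "0 \<le> r")
        case True
        have "(\<integral>\<^sup>+t. ennreal (exp (- (r * (s + t)))) * indicator {0..b} t * indicator {0..} r \<partial>lborel)
          = (\<integral>\<^sup>+t. ennreal (exp (- (r * s))) * (ennreal (exp (- (r * t))) * indicator {0..b} t) \<partial>lborel)"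
          proof (intro nn_integral_cong)
            fix t :: real
            have e: "exp (- (r * (s + t))) = exp (- (r * s)) * exp (- (r * t))"
              by (subst exp_add[symmetric]) (simp add: algebra_simps)
            show "ennreal (exp (- (r * (s + t)))) * indicator {0..b} t * indicator {0..} r = ennreal (exp (- (r * s))) * (ennreal (exp (- (r * t))) * indicator {0..b} t)"
              using True by (simp add: e ennreal_mult mult_ac)
          qed
        also have "\<dots> = ennreal (exp (- (r * s))) * ennreal (phi r b)"
          by (subst nn_integral_cmult) (auto simp: L1 b True less_imp_le)
        finally show ?thesis using True phi_nonneg[OF True, of b] b by (simp add: ennreal_mult)
      qed simp
    qed
    also have "\<dots> = (\<integral>\<^sup>+t. (\<integral>\<^sup>+r. ennreal (exp (- (r * (s + t)))) * indicator {0..b} t * indicator {0..} r \<partial>lborel) \<partial>lborel)"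
      by (rule lborel_pair.Fubini') measurable
    also have "\<dots> = (\<integral>\<^sup>+t. ennreal (1 / (s + t)) * indicator {0..b} t \<partial>lborel)"
    proof (intro nn_integral_cong)
      fix t :: real
      show "(\<integral>\<^sup>+r. ennreal (exp (- (r * (s + t)))) * indicator {0..b} t * indicator {0..} r \<partial>lborel)
           = ennreal (1 / (s + t)) * indicator {0..b} t"
      proof (cases "t \<in> {0..b}")
        case True
        then have "(\<integral>\<^sup>+r. ennreal (exp (- (r * (s + t)))) * indicator {0..b} t * indicator {0..} r \<partial>lborel)
           = (\<integral>\<^sup>+r. ennreal (exp (- (r * (s + t)))) * indicator {0..} r \<partial>lborel)" by simp
        also have "\<dots> = ennreal (1 / (s + t))" using True s by (intro L2) auto
        finally show ?thesis using True by simp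
      qed simp
    qed
    also have "\<dots> = ennreal (ln (s+b) - ln s)" using L3[OF s] b by simp
    finally show ?thesis .
  qed
  have "(\<integral>\<^sup>+r. ennreal (phi r a * phi r b) * indicator {0..} r \<partial>lborel)
     = (\<integral>\<^sup>+r. (\<integral>\<^sup>+s. ennreal (exp (- (r * s)) * phi r b) * indicator {0..a} s * indicator {0..} r \<partial>lborel) \<partial>lborel)"
  proof (intro nn_integral_cong)
    fix r :: real
    show "ennreal (phi r a * phi r b) * indicator {0..} r =
      (\<integral>\<^sup>+s. ennreal (exp (- (r * s)) * phi r b) * indicator {0..a} s * indicator {0..} r \<partial>lborel)"
      by (cases "0 \<le> r") (simp_all add: S1 nn_integral_multc)
  qed
  also have "\<dots> = (\<integral>\<^sup>+s. (\<integral>\<^sup>+r. ennreal (exp (- (r * s)) * phi r b) * indicator {0..a} s * indicator {0..} r \<partial>lborel) \<partial>lborel)"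
    by (rule lborel_pair.Fubini') measurable
  also have "\<dots> = (\<integral>\<^sup>+s. ennreal (if s = 0 then 0 else ln (s+b) - ln s) * indicator {0..a} s \<partial>lborel)"
  proof (intro nn_integral_cong_AE)
    show "AE s in lborel. (\<integral>\<^sup>+r. ennreal (exp (- (r * s)) * phi r b) * indicator {0..a} s * indicator {0..} r \<partial>lborel)
       = ennreal (if s = 0 then 0 else ln (s+b) - ln s) * indicator {0..a} s"
      using AE_lborel_singleton[of 0]
    proof (rule eventually_mono)
      fix s :: real assume s0: "s \<noteq> 0"
      show "(\<integral>\<^sup>+r. ennreal (exp (- (r * s)) * phi r b) * indicator {0..a} s * indicator {0..} r \<partial>lborel)
       = ennreal (if s = 0 then 0 else ln (s+b) - ln s) * indicator {0..a} s"
      proof (cases "s \<in> {0..a}")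
        case True
        then have "0 < s" using s0 by auto
        with True show ?thesis using S4[OF \<open>0 < s\<close>] s0 by simp
      qed simp
    qed
  qed
  also have "\<dots> = ennreal (kfun a b)" by (rule L4(1)[OF a b])
  finally show ?thesis .
qed

lemma kfun_zero1[simp]: "kfun 0 b = 0" and kfun_zero2[simp]: "kfun a 0 = 0"
  by (simp_all add: kfun_def eta_def)

lemma kfun_sym: "kfun a b = kfun b a"
  by (simp add: kfun_def add.commute)

lemma L5:
  assumes a: "0 \<le> a" and b: "0 \<le> b"
  shows "(\<integral>\<^sup>+r. ennreal (phi r a * phi r b) * indicator {0..} r \<partial>lborel) = ennreal (kfun a b)"
    and "0 \<le> kfun a b"
proof -
  show "(\<integral>\<^sup>+r. ennreal (phi r a * phi r b) * indicator {0..} r \<partial>lborel) = ennreal (kfun a b)"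
  proof (cases "a = 0 \<or> b = 0")
    case True then show ?thesis by auto
  next
    case False then show ?thesis using L5_pos a b by auto
  qed
  show "0 \<le> kfun a b"
  proof (cases "a = 0 \<or> b = 0")
    case True then show ?thesis by auto
  next
    case False then show ?thesis using L4(2) a b by auto
  qed
qed

lemma kint:
  assumes a: "0 \<le> a" and b: "0 \<le> b"
  shows "integrable lborel (\<lambda>r. phi r a * phi r b * indicator {0..} r)"
    and "kfun a b = integral\<^sup>L lborel (\<lambda>r. phi r a * phi r b * indicator {0..} r)"
proof -
  have nn: "AE r in lborel. 0 \<le> phi r a * phi r b * indicator {0..} r"
    using a b by (auto intro!: AE_I2 simp: phi_nonneg indicator_def)
  have eq: "(\<integral>\<^sup>+r. ennreal (phi r a * phi r b * indicator {0..} r) \<partial>lborel) = ennreal (kfun a b)"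
    using L5(1)[OF a b] by (simp add: indicator_mult_ennreal mult.commute)
  show "integrable lborel (\<lambda>r. phi r a * phi r b * indicator {0..} r)"
    by (rule integrableI_nonneg) (use nn eq in auto)
  show "kfun a b = integral\<^sup>L lborel (\<lambda>r. phi r a * phi r b * indicator {0..} r)"
    by (subst integral_eq_nn_integral) (use nn eq L5(2)[OF a b] in auto)
qed

lemma sq_sum: "(\<Sum>i<n. u i)^2 * t = (\<Sum>i<n. \<Sum>j<n. u i * u j * t)" for u :: "nat \<Rightarrow> real"
  by (simp add: power2_eq_square sum_distrib_left sum_distrib_right mult_ac)

lemma kfun_pd:
  fixes n :: nat and c xs :: "nat \<Rightarrow> real"
  assumes "\<forall>i<n. 0 \<le> xs i"
  shows "0 \<le> (\<Sum>i<n. \<Sum>j<n. c i * c j * kfun (xs i) (xs j))"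
proof -
  have "(\<Sum>i<n. \<Sum>j<n. c i * c j * kfun (xs i) (xs j))
      = (\<Sum>i<n. \<Sum>j<n. integral\<^sup>L lborel (\<lambda>r. c i * c j * (phi r (xs i) * phi r (xs j) * indicator {0..} r)))"
    using assms by (intro sum.cong refl) (simp add: kint(2))
  also have "\<dots> = integral\<^sup>L lborel (\<lambda>r. \<Sum>i<n. \<Sum>j<n. c i * c j * (phi r (xs i) * phi r (xs j) * indicator {0..} r))"
  proof -
    have I: "integrable lborel (\<lambda>r. c i * c j * (phi r (xs i) * phi r (xs j) * indicator {0..} r))"
      if "i < n" "j < n" for i j
      using assms that by (intro integrable_mult_right kint(1)) auto
    have I2: "integrable lborel (\<lambda>r. \<Sum>j<n. c i * c j * (phi r (xs i) * phi r (xs j) * indicator {0..} r))"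
      if "i < n" for i
      using I that by (intro Bochner_Integration.integrable_sum) auto
    show ?thesis
      by (subst Bochner_Integration.integral_sum) (use I2 in auto, intro sum.cong refl, subst Bochner_Integration.integral_sum, use I in auto)
  qed
  also have "\<dots> = integral\<^sup>L lborel (\<lambda>r. (\<Sum>i<n. c i * phi r (xs i))^2 * indicator {0..} r)"
  proof (intro Bochner_Integration.integral_cong refl)
    fix r
    show "(\<Sum>i<n. \<Sum>j<n. c i * c j * (phi r (xs i) * phi r (xs j) * indicator {0..} r)) =
      (\<Sum>i<n. c i * phi r (xs i))\<^sup>2 * indicator {0..} r"
      unfolding sq_sum[where u="\<lambda>i. c i * phi r (xs i)"] by (intro sum.cong refl) (simp add: mult_ac)
  qed
  also have "\<dots> \<ge> 0" by (intro Bochner_Integration.integral_nonneg) auto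
  finally show ?thesis .
qed

lemma row_term:
  assumes fin: "finite C" and nn: "\<And>c. c \<in> C \<Longrightarrow> 0 \<le> f c" and le: "\<And>c. c \<in> C \<Longrightarrow> f c \<le> Q c"
  shows "(\<Sum>c\<in>C. if f c = 0 then 0 else f c * ln (f c / ((\<Sum>c'\<in>C. f c') * Q c)))
    = eta (\<Sum>c\<in>C. f c) - (\<Sum>c\<in>C. eta (f c)) - (\<Sum>c\<in>C. f c * ln (Q c))"
proof -
  let ?P = "\<Sum>c'\<in>C. f c'"
  have t: "(if f c = 0 then 0 else f c * ln (f c / (?P * Q c))) = - eta (f c) - f c * ln ?P - f c * ln (Q c)"
    if c: "c \<in> C" for c
  proof (cases "f c = 0")
    case True then show ?thesis by (simp add: eta_def)
  next
    case False
    then have fp: "0 < f c" using nn[OF c] by auto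
    have "f c \<le> ?P" using member_le_sum[of c C f] nn c fin by auto
    then have Pp: "0 < ?P" using fp by auto
    have Qp: "0 < Q c" using le[OF c] fp by auto
    have e: "ln (f c / (?P * Q c)) = ln (f c) - ln ?P - ln (Q c)"
      using fp Pp Qp by (simp add: ln_div ln_mult)
    have "f c * ln (f c / (?P * Q c)) = f c * ln (f c) - f c * ln ?P - f c * ln (Q c)"
      unfolding e by (simp add: right_diff_distrib)
    then show ?thesis using False by (simp add: eta_def)
  qed
  have "(\<Sum>c\<in>C. if f c = 0 then 0 else f c * ln (f c / (?P * Q c)))
      = (\<Sum>c\<in>C. - eta (f c) - f c * ln ?P - f c * ln (Q c))"
    using t by (rule sum.cong[OF refl])
  also have "\<dots> = - (\<Sum>c\<in>C. eta (f c)) - ?P * ln ?P - (\<Sum>c\<in>C. f c * ln (Q c))"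
    by (simp add: sum_subtractf sum_negf sum_distrib_right)
  also have "\<dots> = eta ?P - (\<Sum>c\<in>C. eta (f c)) - (\<Sum>c\<in>C. f c * ln (Q c))" by (simp add: eta_def)
  finally show ?thesis .
qed

lemma MIL_eq:
  fixes p :: "'x::finite \<Rightarrow> 'c::finite \<Rightarrow> real" and x y :: 'x
  assumes nonneg: "\<And>a c. 0 \<le> p a c" and xy: "x \<noteq> y"
  shows "MIL p UNIV UNIV x y = K1 (\<lambda>c. p x c) (\<lambda>c. p y c) - K2 (\<lambda>c. p x c) (\<lambda>c. p y c)"
proof -
  define Q where "Q c = (\<Sum>a\<in>UNIV. p a c)" for c
  define R where "R f = (\<Sum>c\<in>UNIV. if f c = 0 then 0 else f c * ln (f c / ((\<Sum>c'\<in>UNIV. f c') * Q c)))"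
    for f :: "'c \<Rightarrow> real"
  define G where "G f = eta (\<Sum>c\<in>UNIV. f c) - (\<Sum>c\<in>UNIV. eta (f c)) - (\<Sum>c\<in>UNIV. f c * ln (Q c))"
    for f :: "'c \<Rightarrow> real"
  let ?D = "UNIV - {x, y}"
  have univ: "(UNIV :: 'x set) = insert x (insert y ?D)" by auto
  have le: "p a c \<le> Q c" for a c
    unfolding Q_def using member_le_sum[of a UNIV "\<lambda>a. p a c"] nonneg by auto
  have le2: "p x c + p y c \<le> Q c" for c
  proof -
    have "(\<Sum>a\<in>{x,y}. p a c) \<le> Q c"
      unfolding Q_def using nonneg by (intro sum_mono2) auto
    then show ?thesis using xy by simp
  qed
  have QM: "(\<Sum>u\<in>merged_support UNIV x y. merge_pmf p x y u c) = Q c" for c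
  proof -
    have "(\<Sum>u\<in>merged_support UNIV x y. merge_pmf p x y u c)
       = (p x c + p y c) + (\<Sum>u\<in>Some ` ?D. merge_pmf p x y u c)"
      unfolding merged_support_def by (subst sum.insert) (auto simp: merge_pmf_def)
    also have "(\<Sum>u\<in>Some ` ?D. merge_pmf p x y u c) = (\<Sum>a\<in>?D. p a c)"
      by (subst sum.reindex) (auto simp: merge_pmf_def)
    also have "(p x c + p y c) + (\<Sum>a\<in>?D. p a c) = Q c"
      unfolding Q_def by (subst univ) (simp add: xy)
    finally show ?thesis .
  qed
  have mS: "merge_pmf p x y (Some a) = p a" for a
    by (rule ext) (simp add: merge_pmf_def)
  have MI1: "mutual_info UNIV UNIV p = R (p x) + R (p y) + (\<Sum>a\<in>?D. R (p a))"
    unfolding mutual_info_def R_def Q_def by (subst univ) (simp add: xy add.assoc)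
  have MI2: "mutual_info (merged_support UNIV x y) UNIV (merge_pmf p x y)
      = R (\<lambda>c. p x c + p y c) + (\<Sum>a\<in>?D. R (p a))"
  proof -
    have "mutual_info (merged_support UNIV x y) UNIV (merge_pmf p x y)
        = (\<Sum>u\<in>merged_support UNIV x y. R (merge_pmf p x y u))"
      unfolding mutual_info_def R_def QM ..
    also have "\<dots> = R (merge_pmf p x y None) + (\<Sum>u\<in>Some ` ?D. R (merge_pmf p x y u))"
      unfolding merged_support_def by (subst sum.insert) auto
    also have "(\<Sum>u\<in>Some ` ?D. R (merge_pmf p x y u)) = (\<Sum>a\<in>?D. R (p a))"
      by (subst sum.reindex) (auto simp: mS)
    also have "merge_pmf p x y None = (\<lambda>c. p x c + p y c)"
      by (auto simp: merge_pmf_def)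
    finally show ?thesis .
  qed
  have RG: "R f = G f" if "\<And>c. 0 \<le> f c" "\<And>c. f c \<le> Q c" for f
    unfolding R_def G_def by (rule row_term) (use that in auto)
  have "MIL p UNIV UNIV x y = G (p x) + G (p y) - G (\<lambda>c. p x c + p y c)"
    unfolding MIL_def MI1 MI2
    using RG[of "p x"] RG[of "p y"] RG[of "\<lambda>c. p x c + p y c"] nonneg le le2
    by (simp add: add_nonneg_nonneg)
  also have "\<dots> = K1 (\<lambda>c. p x c) (\<lambda>c. p y c) - K2 (\<lambda>c. p x c) (\<lambda>c. p y c)"
    unfolding G_def K1_def K2_def kfun_def
    by (simp add: sum.distrib sum_subtractf distrib_right algebra_simps)
  finally show ?thesis .
qed

lemma pd_K1: "pd_kernel (unit_cube :: ('c::finite \<Rightarrow> real) set) K1"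
  unfolding pd_kernel_def
proof (intro conjI ballI allI impI)
  fix u v :: "'c \<Rightarrow> real" show "K1 u v = K1 v u" by (simp add: K1_def kfun_sym)
next
  fix n :: nat and a :: "nat \<Rightarrow> real" and xs :: "nat \<Rightarrow> 'c \<Rightarrow> real"
  assume "\<forall>i<n. xs i \<in> unit_cube"
  then have "\<forall>i<n. 0 \<le> (\<Sum>c\<in>UNIV. xs i c)" by (auto simp: unit_cube_def intro: sum_nonneg)
  then show "0 \<le> (\<Sum>i<n. \<Sum>j<n. a i * a j * K1 (xs i) (xs j))"
    unfolding K1_def by (rule kfun_pd)
qed

lemma pd_K2: "pd_kernel (unit_cube :: ('c::finite \<Rightarrow> real) set) K2"
  unfolding pd_kernel_def
proof (intro conjI ballI allI impI)
  fix u v :: "'c \<Rightarrow> real" show "K2 u v = K2 v u" by (simp add: K2_def kfun_sym)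
next
  fix n :: nat and a :: "nat \<Rightarrow> real" and xs :: "nat \<Rightarrow> 'c \<Rightarrow> real"
  assume h: "\<forall>i<n. xs i \<in> unit_cube"
  have "(\<Sum>i<n. \<Sum>j<n. a i * a j * K2 (xs i) (xs j))
      = (\<Sum>c\<in>UNIV. \<Sum>i<n. \<Sum>j<n. a i * a j * kfun (xs i c) (xs j c))"
    unfolding K2_def by (simp add: sum_distrib_left sum.swap[of _ UNIV])
  also have "\<dots> \<ge> 0"
  proof (rule sum_nonneg)
    fix c :: 'c
    have "\<forall>i<n. 0 \<le> xs i c" using h by (auto simp: unit_cube_def)
    then show "0 \<le> (\<Sum>i<n. \<Sum>j<n. a i * a j * kfun (xs i c) (xs j c))" by (rule kfun_pd)
  qed
  finally show "0 \<le> (\<Sum>i<n. \<Sum>j<n. a i * a j * K2 (xs i) (xs j))" .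
qed

theorem theorem4:
  fixes p :: "'x::finite \<Rightarrow> 'c::finite \<Rightarrow> real" and x y :: 'x
  assumes nonneg: "\<And>a c. 0 \<le> p a c"
    and total: "(\<Sum>a\<in>UNIV. \<Sum>c\<in>UNIV. p a c) = 1"
    and xy: "x \<noteq> y"
  shows "MIL p UNIV UNIV x y = K1 (\<lambda>c. p x c) (\<lambda>c. p y c) - K2 (\<lambda>c. p x c) (\<lambda>c. p y c)
    \<and> pd_kernel (unit_cube :: ('c \<Rightarrow> real) set) K1
    \<and> pd_kernel (unit_cube :: ('c \<Rightarrow> real) set) K2
    \<and> krein_kernel (unit_cube :: ('c \<Rightarrow> real) set) (\<lambda>v w. K1 v w - K2 v w)"
proof -
  have "MIL p UNIV UNIV x y = K1 (\<lambda>c. p x c) (\<lambda>c. p y c) - K2 (\<lambda>c. p x c) (\<lambda>c. p y c)"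
    by (rule MIL_eq) (use nonneg xy in auto)
  moreover have "krein_kernel (unit_cube :: ('c \<Rightarrow> real) set) (\<lambda>v w. K1 v w - K2 v w)"
    unfolding krein_kernel_def using pd_K1 pd_K2 by blast
  ultimately show ?thesis using pd_K1 pd_K2 by blast
qed

end
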